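(* Let $\{n_k\}_{k\ge0}$ be an increasing sequence of natural numbers with $n_{k+1}/n_k\le C$ for some constant $C$. Let $f$ be holomorphic on the open unit disk, $0<r<1$, $K=\overline\Delta_r$, and let $N_K(n)$ be the maximal number (possibly $+\infty$) of zeros on $K$ of $f-p$, $p\in\mathcal P_n$. If $\lim_{k\to\infty}N_K(n_k)/n_k=\infty$, then $f$ is a polynomial.
   Context: $\mathcal P_n$ is the space of complex polynomials of degree at most $n$; zeros are counted with multiplicity. *)

theory Defs
  imports "HOL-Analysis.Analysis" "HOL-Computational_Algebra.Polynomial"
begin

text \<open>Multiplicity of a zero of g at z: the largest m (possibly infinity) such that
  the derivatives of order 0,...,m-1 of g vanish at z. (Non-zeros have multiplicity 0;
  a function vanishing identically near z has multiplicity infinity.)\<close>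
definition zero_mult :: "(complex \<Rightarrow> complex) \<Rightarrow> complex \<Rightarrow> enat" where
  "zero_mult g z = (SUP m \<in> {m::nat. \<forall>k<m. (deriv ^^ k) g z = 0}. enat m)"

definition zero_count :: "(complex \<Rightarrow> complex) \<Rightarrow> complex set \<Rightarrow> enat" where
  "zero_count g K = (SUP S \<in> {S. finite S \<and> S \<subseteq> K}. \<Sum>z\<in>S. zero_mult g z)"

definition NK :: "(complex \<Rightarrow> complex) \<Rightarrow> complex set \<Rightarrow> nat \<Rightarrow> enat" where
  "NK f K n = (SUP p \<in> {p::complex poly. degree p \<le> n}. zero_count (\<lambda>z. f z - poly p z) K)"

end

theory Submission
  imports Defs "HOL-Complex_Analysis.Complex_Analysis"
begin
lemma deriv_lin_funpow:
  "(deriv ^^ i) (\<lambda>w::complex. w - a) = (if i = 0 then (\<lambda>w. w - a) else if i = 1 then (\<lambda>w. 1) else (\<lambda>w. 0))"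
proof (induction i)
  case 0 then show ?case by simp
next
  case (Suc i)
  have d1: "deriv (\<lambda>w::complex. w - a) = (\<lambda>w. 1)"
    by (rule ext) (rule DERIV_imp_deriv, auto intro!: derivative_eq_intros)
  have d0: "deriv (\<lambda>w::complex. 1) = (\<lambda>w. 0)" "deriv (\<lambda>w::complex. 0) = (\<lambda>w. 0)"
    by (auto intro!: ext DERIV_imp_deriv derivative_eq_intros)
  show ?case using Suc d1 d0 by (auto)
qed

lemma sum_01:
  "(\<Sum>i=0..(k::nat). (if i = 0 then A else if i = 1 then B else (0::'a::comm_monoid_add))) = A + (if k \<ge> 1 then B else 0)"
  by (induction k) (auto simp: add.commute)

lemma leibniz_lin:
  assumes "G holomorphic_on S" "open S" "z \<in> S"
  shows "(deriv ^^ k) (\<lambda>w. (w - a) * G w) z = (z - a) * (deriv ^^ k) G z + of_nat k * (deriv ^^ (k - 1)) G z"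
proof -
  have hl: "(\<lambda>w::complex. w - a) holomorphic_on S" by (auto intro!: holomorphic_intros)
  have "(deriv ^^ k) (\<lambda>w. (w - a) * G w) z =
      (\<Sum>i = 0..k. of_nat (k choose i) * (deriv ^^ i) (\<lambda>w. w - a) z * (deriv ^^ (k-i)) G z)"
    by (rule higher_deriv_mult[OF hl assms])
  also have "\<dots> = (\<Sum>i = 0..k. (if i = 0 then (z - a) * (deriv ^^ k) G z else if i = 1 then of_nat k * (deriv ^^ (k - 1)) G z else 0))"
    by (rule sum.cong) (auto simp: deriv_lin_funpow)
  also have "\<dots> = (z - a) * (deriv ^^ k) G z + of_nat k * (deriv ^^ (k - 1)) G z"
    by (subst sum_01) auto
  finally show ?thesis .
qed

lemma factor1:
  assumes "g holomorphic_on S" "open S" "g a = 0"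
  obtains G where "G holomorphic_on S" "\<And>w. w \<in> S \<Longrightarrow> g w = (w - a) * G w"
proof -
  define G where "G = (\<lambda>z. if z = a then deriv g a else (g z - g a)/(z-a))"
  have "G holomorphic_on S" unfolding G_def by (rule pole_lemma_open[OF assms(1,2)])
  moreover have "g w = (w - a) * G w" if "w \<in> S" for w
    using assms(3) by (auto simp: G_def)
  ultimately show ?thesis using that by blast
qed

lemma factor_multi:
  assumes "open S"
  shows "\<And>g m Z. g holomorphic_on S \<Longrightarrow> finite Z \<Longrightarrow> Z \<subseteq> S \<Longrightarrow> (\<Sum>z\<in>Z. m z) = N \<Longrightarrow>
     (\<forall>z\<in>Z. \<forall>k<m z. (deriv ^^ k) g z = 0) \<Longrightarrow>
     \<exists>as h. length as = N \<and> set as \<subseteq> Z \<and> h holomorphic_on S \<and>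
        (\<forall>w\<in>S. g w = (\<Prod>i<N. (w - as ! i)) * h w)"
proof (induction N)
  case 0
  then show ?case by (intro exI[of _ "[]"] exI[of _ g]) auto
next
  case (Suc N g m Z)
  have "\<exists>z0\<in>Z. m z0 > 0"
  proof (rule ccontr)
    assume "\<not> ?thesis" then have "\<forall>z\<in>Z. m z = 0" by auto
    then have "(\<Sum>z\<in>Z. m z) = 0" by simp
    with Suc.prems show False by simp
  qed
  then obtain z0 where z0: "z0 \<in> Z" "m z0 > 0" by blast
  have "g z0 = 0" using Suc.prems(5) z0 by (metis funpow_0)
  then obtain G where G: "G holomorphic_on S" "\<And>w. w \<in> S \<Longrightarrow> g w = (w - z0) * G w"
    using factor1[OF Suc.prems(1) assms] by blast
  have gd: "(deriv ^^ k) g z = (z - z0) * (deriv ^^ k) G z + of_nat k * (deriv ^^ (k - 1)) G z"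
    if "z \<in> S" for z k
  proof -
    have "(deriv ^^ k) g z = (deriv ^^ k) (\<lambda>w. (w - z0) * G w) z"
      apply (rule higher_deriv_cong_ev[OF _ refl])
      using assms that G(2) by (auto simp: eventually_nhds intro!: exI[of _ S])
    then show ?thesis using leibniz_lin[OF G(1) assms that] by simp
  qed
  define m' where "m' = m(z0 := m z0 - 1)"
  have sum': "(\<Sum>z\<in>Z. m' z) = N"
  proof -
    have "(\<Sum>z\<in>Z. m z) = m z0 + (\<Sum>z\<in>Z-{z0}. m z)" by (rule sum.remove[OF Suc.prems(2) z0(1)])
    moreover have "(\<Sum>z\<in>Z. m' z) = m' z0 + (\<Sum>z\<in>Z-{z0}. m' z)" by (rule sum.remove[OF Suc.prems(2) z0(1)])
    moreover have "(\<Sum>z\<in>Z-{z0}. m' z) = (\<Sum>z\<in>Z-{z0}. m z)" by (rule sum.cong) (auto simp: m'_def)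
    ultimately show ?thesis using Suc.prems(4) z0(2) by (simp add: m'_def)
  qed
  have der': "\<forall>z\<in>Z. \<forall>k<m' z. (deriv ^^ k) G z = 0"
  proof (intro ballI allI impI)
    fix z k assume z: "z \<in> Z" and k: "k < m' z"
    have zS: "z \<in> S" using z Suc.prems(3) by auto
    show "(deriv ^^ k) G z = 0"
    proof (cases "z = z0")
      case True
      then have "Suc k < m z0" using k z0 by (simp add: m'_def)
      then have "(deriv ^^ Suc k) g z0 = 0" using Suc.prems(5) z0 by blast
      moreover have "(1::complex) + of_nat k \<noteq> 0"
        by (metis of_nat_Suc of_nat_eq_0_iff nat.distinct(1))
      ultimately show ?thesis using gd[of z0 "Suc k"] zS True by simp
    next
      case False
      then have km: "k < m z" using k by (simp add: m'_def)
      show ?thesis using km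
      proof (induction k)
        case 0
        then have "(deriv ^^ 0) g z = 0" using Suc.prems(5) z by blast
        then show ?case using gd[of z 0] zS False by simp
      next
        case (Suc k)
        then have "(deriv ^^ Suc k) G z = 0 \<or> True" by simp
        from Suc have ih: "(deriv ^^ k) G z = 0" by simp
        have "(deriv ^^ Suc k) g z = 0" using Suc.prems Suc(2) z \<open>\<forall>z\<in>Z. \<forall>k<m z. (deriv ^^ k) g z = 0\<close> by blast
        then show ?case using gd[of z "Suc k"] zS False ih by simp
      qed
    qed
  qed
  obtain as h where ah: "length as = N" "set as \<subseteq> Z" "h holomorphic_on S"
      "\<forall>w\<in>S. G w = (\<Prod>i<N. (w - as ! i)) * h w"
    using Suc.IH[OF G(1) Suc.prems(2,3) sum' der'] by blast
  show ?case
  proof (intro exI[of _ "z0 # as"] exI[of _ h] conjI)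
    show "length (z0 # as) = Suc N" using ah by simp
    show "set (z0 # as) \<subseteq> Z" using ah z0 by simp
    show "h holomorphic_on S" by fact
    show "\<forall>w\<in>S. g w = (\<Prod>i<Suc N. (w - (z0 # as) ! i)) * h w"
    proof
      fix w assume w: "w \<in> S"
      have "(\<Prod>i<Suc N. (w - (z0 # as) ! i)) = (w - z0) * (\<Prod>i<N. (w - as ! i))"
        by (subst prod.lessThan_Suc_shift) simp
      then show "g w = (\<Prod>i<Suc N. (w - (z0 # as) ! i)) * h w"
        using G(2)[OF w] ah(4) w by (simp add: mult.assoc)
    qed
  qed
qed

lemma blaschke_pt:
  fixes a z :: complex and r \<rho> :: real
  assumes "0 < r" "r < \<rho>" "norm a \<le> r" "norm z \<le> r"
  shows "\<rho> * norm (z - a) \<le> (2*\<rho>*r/(\<rho>^2+r^2)) * norm (of_real (\<rho>^2) - cnj a * z)"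
proof -
  define D where "D = (norm (of_real (\<rho>^2) - cnj a * z))^2"
  define P where "P = (\<rho>^2 - (norm a)^2) * (\<rho>^2 - (norm z)^2)"
  have id: "D - \<rho>^2 * (norm (z - a))^2 = P"
    unfolding D_def P_def cmod_power2 by (simp add: power2_eq_square algebra_simps)
  have n1: "norm (of_real (\<rho>^2) - cnj a * z) \<le> \<rho>^2 + r^2"
  proof -
    have "norm (cnj a * z) \<le> r * r" using assms by (simp add: norm_mult mult_mono)
    moreover have "norm (of_real (\<rho>^2) :: complex) = \<rho>^2" by (simp only: norm_of_real) simp
    ultimately show ?thesis using norm_triangle_ineq4[of "of_real (\<rho>^2)" "cnj a * z"]
      by (simp add: power2_eq_square)
  qed
  have D1: "D \<le> (\<rho>^2 + r^2)^2" unfolding D_def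
    by (rule power_mono[OF n1]) simp
  have a2: "(norm a)^2 \<le> r^2" "(norm z)^2 \<le> r^2" using assms by (auto intro: power_mono)
  have rr: "r^2 < \<rho>^2" using assms by (intro power_strict_mono) auto
  have P1: "(\<rho>^2 - r^2)^2 \<le> P" unfolding P_def power2_eq_square[of "\<rho>^2 - r^2"]
    by (rule mult_mono) (use a2 rr in auto)
  define s where "s = \<rho>^2 + r^2"
  have s0: "s > 0" using assms unfolding s_def by (simp add: add_pos_nonneg)
  have "\<rho>^2 * (norm (z - a))^2 \<le> (2*\<rho>*r/s)^2 * D"
  proof -
    have ss: "s^2 - (\<rho>^2-r^2)^2 = (2*\<rho>*r)^2" unfolding s_def by (simp add: power2_eq_square algebra_simps)
    have "(2*\<rho>*r/s)^2 = (s^2 - (\<rho>^2-r^2)^2)/s^2" unfolding ss by (simp add: power_divide)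
    also have "\<dots> = 1 - (\<rho>^2-r^2)^2/s^2" using s0 by (simp add: diff_divide_distrib)
    finally have e: "(2*\<rho>*r/s)^2 = 1 - (\<rho>^2-r^2)^2/s^2" .
    have "(2*\<rho>*r/s)^2 * D = D - D * ((\<rho>^2 - r^2)^2 / s^2)" unfolding e by (simp add: algebra_simps)
    moreover have "D * ((\<rho>^2 - r^2)^2 / s^2) \<le> (\<rho>^2 - r^2)^2"
    proof -
      have "s^2 > 0" using s0 by simp
      then have "D / s^2 \<le> 1" using D1 by (simp add: s_def divide_le_eq)
      then have "D * ((\<rho>^2 - r^2)^2 / s^2) \<le> 1 * (\<rho>^2 - r^2)^2"
        by (metis (no_types, lifting) mult.commute mult_right_mono times_divide_eq_right zero_le_power2)
      then show ?thesis by simp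
    qed
    ultimately show ?thesis using id P1 by linarith
  qed
  then have "(\<rho> * norm (z - a))^2 \<le> ((2*\<rho>*r/s) * norm (of_real (\<rho>^2) - cnj a * z))^2"
    unfolding power_mult_distrib D_def by simp
  then show ?thesis unfolding s_def[symmetric]
    by (rule power2_le_imp_le) (use assms s0 in auto)
qed

lemma theta_le1:
  fixes r \<rho> :: real
  assumes "0 < r" "r < \<rho>" shows "2*\<rho>*r/(\<rho>^2+r^2) \<le> 1" "0 \<le> 2*\<rho>*r/(\<rho>^2+r^2)"
proof -
  have "0 \<le> (\<rho> - r)^2" by simp
  then have "2*\<rho>*r \<le> \<rho>^2+r^2" by (simp add: power2_eq_square algebra_simps)
  moreover have "\<rho>^2+r^2 > 0" using assms by (simp add: add_pos_nonneg)
  ultimately show "2*\<rho>*r/(\<rho>^2+r^2) \<le> 1" by simp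
  show "0 \<le> 2*\<rho>*r/(\<rho>^2+r^2)" using assms by simp
qed

lemma blaschke_bound:
  fixes h :: "complex \<Rightarrow> complex" and as :: "complex list"
  assumes hol: "h holomorphic_on ball 0 R0" and r: "0 < r" "r < \<rho>" "\<rho> < R0"
    and as: "set as \<subseteq> cball 0 r" "length as = N"
    and gB: "\<And>t. norm t = \<rho> \<Longrightarrow> norm ((\<Prod>i<N. (t - as!i)) * h t) \<le> B"
    and z: "norm z \<le> r"
  shows "norm ((\<Prod>i<N. (z - as!i)) * h z) \<le> (2*\<rho>*r/(\<rho>^2+r^2))^N * B"
proof -
  define \<theta> where "\<theta> = 2*\<rho>*r/(\<rho>^2+r^2)"
  define H where "H = (\<lambda>w. h w * (\<Prod>i<N. (of_real (\<rho>^2) - cnj (as!i) * w) / of_real \<rho>))"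
  have asn: "norm (as!i) \<le> r" if "i < N" for i
    using as that by (auto simp: subset_iff)
  have holH: "H holomorphic_on ball 0 R0" unfolding H_def
    by (intro holomorphic_intros hol) (use r in auto)
  have sub: "cball 0 \<rho> \<subseteq> ball 0 R0" using r by auto
  have Hsph: "norm (H t) \<le> B" if t: "norm t = \<rho>" for t
  proof -
    have eq: "norm (of_real (\<rho>^2) - cnj a * t) = \<rho> * norm (t - a)" for a
    proof -
      have "of_real (\<rho>^2) = t * cnj t" using complex_norm_square[of t] t by simp
      then have e1: "of_real (\<rho>^2) - cnj a * t = t * cnj (t - a)" by (simp add: algebra_simps)
      have "norm (t * cnj (t - a)) = \<rho> * norm (t - a)" by (simp only: norm_mult complex_mod_cnj t)
      then show ?thesis using e1 by metis
    qed
    have pe: "(\<Prod>i<N. norm ((of_real (\<rho>^2) - cnj (as!i) * t) / of_real \<rho>)) = (\<Prod>i<N. norm (t - as!i))"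
    proof (rule prod.cong[OF refl])
      fix i
      have "norm ((of_real (\<rho>^2) - cnj (as!i) * t) / of_real \<rho>) = norm (of_real (\<rho>^2) - cnj (as!i) * t) / \<rho>"
        using r by (simp only: norm_divide norm_of_real)
      then show "norm ((of_real (\<rho>^2) - cnj (as!i) * t) / of_real \<rho>) = norm (t - as!i)"
        unfolding eq using r by simp
    qed
    have "norm (H t) = norm (h t) * (\<Prod>i<N. norm (t - as!i))"
      unfolding H_def norm_mult prod_norm[symmetric] pe ..
    also have "\<dots> = norm ((\<Prod>i<N. (t - as!i)) * h t)" by (simp add: norm_mult prod_norm)
    also have "\<dots> \<le> B" by (rule gB[OF t])
    finally show ?thesis .
  qed
  have Hz: "norm (H z) \<le> B"
  proof (rule maximum_modulus_frontier[of H "cball 0 \<rho>"])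
    show "H holomorphic_on interior (cball 0 \<rho>)"
      using holH by (rule holomorphic_on_subset) (use r in auto)
    show "continuous_on (closure (cball 0 \<rho>)) H"
      using holomorphic_on_imp_continuous_on[OF holomorphic_on_subset[OF holH sub]] by simp
    show "bounded (cball (0::complex) \<rho>)" by simp
    show "norm (H w) \<le> B" if "w \<in> frontier (cball 0 \<rho>)" for w
      using that r by (intro Hsph) auto
    show "z \<in> cball 0 \<rho>" using z r by auto
  qed
  have Dnz: "of_real (\<rho>^2) - cnj (as!i) * z \<noteq> 0" if "i < N" for i
  proof
    assume "of_real (\<rho>^2) - cnj (as!i) * z = 0"
    then have "norm (cnj (as!i) * z) = \<rho>^2" by (metis eq_iff_diff_eq_0 norm_of_real abs_power2 real_norm_def)
    moreover have "norm (cnj (as!i) * z) \<le> r * r" using asn[OF that] z r by (simp add: norm_mult mult_mono)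
    moreover have "r * r < \<rho>^2" using r by (simp add: power2_eq_square mult_strict_mono)
    ultimately show False by simp
  qed
  have "(\<Prod>i<N. (z - as!i)) * h z = H z * (\<Prod>i<N. of_real \<rho> * (z - as!i) / (of_real (\<rho>^2) - cnj (as!i) * z))"
  proof -
    have "(\<Prod>i<N. (of_real (\<rho>^2) - cnj (as!i) * z) / of_real \<rho>) * (\<Prod>i<N. of_real \<rho> * (z - as!i) / (of_real (\<rho>^2) - cnj (as!i) * z))
        = (\<Prod>i<N. (of_real (\<rho>^2) - cnj (as!i) * z) / of_real \<rho> * (of_real \<rho> * (z - as!i) / (of_real (\<rho>^2) - cnj (as!i) * z)))"
      by (simp only: prod.distrib)
    also have "\<dots> = (\<Prod>i<N. (z - as!i))"
      by (rule prod.cong) (use Dnz r in auto)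
    finally show ?thesis unfolding H_def by (simp add: mult_ac)
  qed
  also have "norm \<dots> \<le> B * \<theta>^N"
  proof -
    have "norm (\<Prod>i<N. of_real \<rho> * (z - as!i) / (of_real (\<rho>^2) - cnj (as!i) * z)) \<le> (\<Prod>i<N. \<theta>)"
      unfolding prod_norm[symmetric]
    proof (rule prod_mono)
      fix i assume i: "i \<in> {..<N}"
      have "\<rho> * norm (z - as!i) \<le> \<theta> * norm (of_real (\<rho>^2) - cnj (as!i) * z)"
        unfolding \<theta>_def by (rule blaschke_pt) (use r asn i z in auto)
      moreover have "norm (of_real (\<rho>^2) - cnj (as!i) * z) > 0" using Dnz i by simp
      ultimately show "0 \<le> norm (of_real \<rho> * (z - as!i) / (of_real (\<rho>^2) - cnj (as!i) * z)) \<and>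
          norm (of_real \<rho> * (z - as!i) / (of_real (\<rho>^2) - cnj (as!i) * z)) \<le> \<theta>"
        using r by (simp add: norm_mult norm_divide divide_le_eq)
    qed
    then have "norm (\<Prod>i<N. of_real \<rho> * (z - as!i) / (of_real (\<rho>^2) - cnj (as!i) * z)) \<le> \<theta>^N" by simp
    then show ?thesis unfolding norm_mult
      by (rule mult_mono[OF Hz]) (use order_trans[OF norm_ge_zero Hz] in auto)
  qed
  finally show ?thesis by (simp add: \<theta>_def mult.commute)
qed

lemma deriv_poly_funpow: "(deriv ^^ j) (poly (p::complex poly)) = poly ((pderiv ^^ j) p)"
proof (induction j)
  case 0 then show ?case by simp
next
  case (Suc j)
  have "deriv (poly ((pderiv ^^ j) p)) = poly (pderiv ((pderiv ^^ j) p))"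
    by (rule ext, rule DERIV_imp_deriv, rule poly_DERIV)
  then show ?case using Suc by simp
qed

lemma higher_pderiv_zero: "degree (p::complex poly) < j \<Longrightarrow> (pderiv ^^ j) p = 0"
  by (rule poly_eqI) (simp add: coeff_higher_pderiv coeff_eq_0)

lemma coeff_as_deriv: "coeff (p::complex poly) i = poly ((pderiv ^^ i) p) 0 / fact i"
  by (simp add: poly_0_coeff_0 coeff_higher_pderiv pochhammer_fact[symmetric])

lemma poly_bound:
  fixes p :: "complex poly"
  assumes "degree p \<le> n" "0 < r" "r \<le> \<rho>" "\<And>z. norm z = r \<Longrightarrow> norm (poly p z) \<le> P"
    and t: "norm t \<le> \<rho>"
  shows "norm (poly p t) \<le> (real n + 1) * P * (\<rho>/r)^n"
proof -
  have P0: "0 \<le> P" using assms(4)[of "of_real r"] assms(2) by (metis norm_ge_zero norm_of_real abs_of_pos order_trans)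
  have cb: "norm (coeff p i) \<le> P / r^i" for i
  proof -
    have "norm ((deriv ^^ i) (poly p) 0) \<le> fact i * P / r^i"
      by (rule Cauchy_inequality) (use assms in \<open>auto intro!: holomorphic_intros continuous_intros simp: norm_minus_commute\<close>)
    then show ?thesis unfolding coeff_as_deriv deriv_poly_funpow
      by (simp add: norm_divide field_simps)
  qed
  have q1: "1 \<le> \<rho>/r" using assms by simp
  have "norm (poly p t) \<le> (\<Sum>i\<le>degree p. norm (coeff p i * t^i))"
    unfolding poly_altdef by (rule norm_sum)
  also have "\<dots> \<le> (\<Sum>i\<le>degree p. P * (\<rho>/r)^n)"
  proof (rule sum_mono)
    fix i assume i: "i \<in> {..degree p}"
    have "norm (coeff p i * t^i) \<le> (P / r^i) * \<rho>^i"
      unfolding norm_mult norm_power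
      by (rule mult_mono[OF cb power_mono[OF t]]) (use P0 assms in auto)
    also have "\<dots> = P * (\<rho>/r)^i" by (simp add: power_divide)
    also have "\<dots> \<le> P * (\<rho>/r)^n"
      by (rule mult_left_mono[OF power_increasing[OF _ q1]]) (use i assms P0 in auto)
    finally show "norm (coeff p i * t^i) \<le> P * (\<rho>/r)^n" .
  qed
  also have "\<dots> = (degree p + 1) * (P * (\<rho>/r)^n)" by simp
  also have "\<dots> \<le> (real n + 1) * (P * (\<rho>/r)^n)"
    by (rule mult_right_mono) (use assms P0 q1 in auto)
  finally show ?thesis by (simp only: mult.assoc)
qed

lemma key_lemma:
  fixes F :: "complex \<Rightarrow> complex" and p :: "complex poly" and m :: "complex \<Rightarrow> nat"
  assumes holF: "F holomorphic_on ball 0 R0" and r: "0 < r" "r < \<rho>" "\<rho> < R0"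
    and degp: "degree p \<le> n"
    and A: "\<And>t. norm t \<le> \<rho> \<Longrightarrow> norm (F t) \<le> A"
    and Z: "finite Z" "Z \<subseteq> cball 0 r"
    and der: "\<forall>z\<in>Z. \<forall>k<m z. (deriv ^^ k) (\<lambda>w. F w - poly p w) z = 0"
    and N: "N = (\<Sum>z\<in>Z. m z)"
    and small: "(2*\<rho>*r/(\<rho>^2+r^2))^N * (real n + 1) * (\<rho>/r)^n \<le> 1/2"
    and j: "n < j"
  shows "norm ((deriv ^^ j) F 0) / fact j * r^j \<le> 4 * A * (real n + 1) * (2*\<rho>*r/(\<rho>^2+r^2))^N * (\<rho>/r)^n"
proof -
  define \<theta> where "\<theta> = 2*\<rho>*r/(\<rho>^2+r^2)"
  define g where "g = (\<lambda>w. F w - poly p w)"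
  have holg: "g holomorphic_on ball 0 R0" unfolding g_def by (intro holomorphic_intros holF)
  have ZS: "Z \<subseteq> ball 0 R0" using Z r by auto
  have "\<exists>as h. length as = N \<and> set as \<subseteq> Z \<and> h holomorphic_on ball 0 R0 \<and>
        (\<forall>w\<in>ball 0 R0. g w = (\<Prod>i<N. (w - as ! i)) * h w)"
    by (rule factor_multi[OF open_ball holg Z(1) ZS N[symmetric] der[folded g_def]])
  then obtain as h where ah: "length as = N" "set as \<subseteq> Z" "h holomorphic_on ball 0 R0"
      "\<forall>w\<in>ball 0 R0. g w = (\<Prod>i<N. (w - as ! i)) * h w"
    by blast
  have "norm (F 0) \<le> A" by (rule A) (use r in simp)
  then have A0: "0 \<le> A" using norm_ge_zero[of "F 0"] by linarith
  have contg: "continuous_on (cball 0 r) g"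
    using holomorphic_on_imp_continuous_on[OF holg] by (rule continuous_on_subset) (use r in auto)
  obtain z0 where z0: "z0 \<in> cball 0 r" "\<And>z. z \<in> cball 0 r \<Longrightarrow> norm (g z) \<le> norm (g z0)"
  proof -
    have "continuous_on (cball 0 r) (\<lambda>z. norm (g z))" using contg by (intro continuous_intros)
    then have "\<exists>x\<in>cball 0 r. \<forall>y\<in>cball 0 r. norm (g y) \<le> norm (g x)"
      using continuous_attains_sup[of "cball 0 r" "\<lambda>z. norm (g z)"] r by auto
    then show ?thesis using that by blast
  qed
  define E where "E = norm (g z0)"
  have pr: "norm (poly p z) \<le> A + E" if "norm z = r" for z
  proof -
    have "poly p z = F z - g z" by (simp add: g_def)
    then have "norm (poly p z) \<le> norm (F z) + norm (g z)" by (metis norm_triangle_ineq4)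
    moreover have "norm (F z) \<le> A" using A that r by auto
    moreover have "norm (g z) \<le> E" unfolding E_def using z0(2) that by auto
    ultimately show ?thesis by linarith
  qed
  define c where "c = (real n + 1) * (\<rho>/r)^n"
  have c1: "1 \<le> c" unfolding c_def
  proof -
    have "1 \<le> (\<rho>/r)^n" using r by (intro one_le_power) simp
    moreover have "(1::real) \<le> n+1" by simp
    ultimately show "1 \<le> (real n + 1) * (\<rho>/r)^n" using mult_mono[of 1 "real n+1" 1 "(\<rho>/r)^n"] by simp
  qed
  have th: "0 \<le> \<theta>" "\<theta> \<le> 1" unfolding \<theta>_def using theta_le1[OF r(1,2)] by auto
  have gsph: "norm (g t) \<le> A + c * (A + E)" if "norm t = \<rho>" for t
  proof -
    have "norm (g t) \<le> norm (F t) + norm (poly p t)" unfolding g_def by (rule norm_triangle_ineq4)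
    moreover have "norm (F t) \<le> A" using A that by auto
    moreover have "norm (poly p t) \<le> (real n + 1) * (A + E) * (\<rho>/r)^n"
      by (rule poly_bound[OF degp r(1) less_imp_le[OF r(2)] pr]) (use that in auto)
    moreover have "(real n + 1) * (A + E) * (\<rho>/r)^n = c * (A+E)" by (simp add: c_def mult_ac)
    ultimately show ?thesis by linarith
  qed
  have EB: "E \<le> \<theta>^N * (A + c * (A + E))"
  proof -
    have "norm ((\<Prod>i<N. (z0 - as!i)) * h z0) \<le> \<theta>^N * (A + c * (A + E))"
      unfolding \<theta>_def
    proof (rule blaschke_bound[OF ah(3) r])
      show "set as \<subseteq> cball 0 r" using ah(2) Z by auto
      show "length as = N" by fact
      show "norm ((\<Prod>i<N. (t - as!i)) * h t) \<le> A + c * (A + E)" if "norm t = \<rho>" for t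
      proof -
        have "t \<in> ball 0 R0" using that r by simp
        then have "g t = (\<Prod>i<N. (t - as!i)) * h t" using ah(4) by blast
        then show ?thesis using gsph[OF that] by metis
      qed
      show "norm z0 \<le> r" using z0 by auto
    qed
    moreover have "z0 \<in> ball 0 R0" using z0(1) r by simp
    then have "g z0 = (\<Prod>i<N. (z0 - as!i)) * h z0" using ah(4) by blast
    ultimately show ?thesis unfolding E_def by metis
  qed
  have sm: "\<theta>^N * c \<le> 1/2" using small unfolding \<theta>_def c_def by (simp only: mult.assoc)
  have E0: "0 \<le> E" unfolding E_def by simp
  have "\<theta>^N * 1 \<le> \<theta>^N * c" by (rule mult_left_mono[OF c1]) (use th in simp)
  then have "\<theta>^N \<le> \<theta>^N * c" by simp
  then have t1: "\<theta>^N * A \<le> (\<theta>^N * c) * A" by (rule mult_right_mono) (use A0 in auto)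
  have t2: "\<theta>^N * (A + c * (A + E)) = \<theta>^N * A + (\<theta>^N * c) * A + (\<theta>^N * c) * E"
    by (simp add: algebra_simps)
  have t3: "(\<theta>^N * c) * E \<le> 1/2 * E" by (rule mult_right_mono[OF sm E0])
  have Ebound: "E \<le> 4 * (\<theta>^N * c) * A" using EB t1 t2 t3 by linarith
  have "norm ((deriv ^^ j) g 0) \<le> fact j * E / r^j"
  proof (rule Cauchy_inequality)
    show "g holomorphic_on ball 0 r" by (rule holomorphic_on_subset[OF holg]) (use r in auto)
    show "continuous_on (cball 0 r) g" by (rule contg)
    show "0 < r" by (rule r)
    show "norm (g x) \<le> E" if "norm (0 - x) = r" for x
      unfolding E_def by (rule z0(2)) (use that in simp)
  qed
  moreover have "(deriv ^^ j) g 0 = (deriv ^^ j) F 0"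
  proof -
    have "(deriv ^^ j) g 0 = (deriv ^^ j) F 0 - (deriv ^^ j) (poly p) 0"
      unfolding g_def by (rule higher_deriv_diff[of _ "ball 0 R0"]) (use holF r in \<open>auto intro: holomorphic_intros\<close>)
    then show ?thesis using degp j by (simp add: deriv_poly_funpow higher_pderiv_zero)
  qed
  ultimately have "norm ((deriv ^^ j) F 0) \<le> fact j * E / r^j" by simp
  then have "norm ((deriv ^^ j) F 0) / fact j * r^j \<le> (fact j * E / r^j) / fact j * r^j"
    by (intro mult_right_mono divide_right_mono) (use r in auto)
  also have "(fact j * E / r^j) / fact j * r^j = E" using r by simp
  finally have "norm ((deriv ^^ j) F 0) / fact j * r^j \<le> 4 * (\<theta>^N * c) * A" using Ebound by linarith
  moreover have "4 * (\<theta>^N * c) * A = 4 * A * (real n + 1) * (2*\<rho>*r/(\<rho>^2+r^2))^N * (\<rho>/r)^n"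
    unfolding \<theta>_def c_def by (simp add: mult_ac)
  ultimately show ?thesis by simp
qed

lemma sup_enat_atMost: "(SUP m\<in>{..(k0::nat)}. enat m) = enat k0"
  by (rule antisym) (auto intro: SUP_least SUP_upper2[of k0])

lemma zm_finite:
  assumes "\<not> (\<forall>k. P k)"
  shows "\<exists>m. (SUP m\<in>{m::nat. \<forall>k<m. P k}. enat m) = enat m \<and> (\<forall>k<m. P k)"
proof -
  define k0 where "k0 = (LEAST k. \<not> P k)"
  have nk0: "\<not> P k0" unfolding k0_def by (rule LeastI_ex) (use assms in auto)
  have lt: "P k" if "k < k0" for k using not_less_Least[of k "\<lambda>k. \<not> P k"] that unfolding k0_def by auto
  have "{m::nat. \<forall>k<m. P k} = {..k0}"
  proof (intro set_eqI iffI)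
    fix m assume "m \<in> {m. \<forall>k<m. P k}"
    then show "m \<in> {..k0}" using nk0 by (cases "k0 < m") auto
  next
    fix m assume "m \<in> {..k0}" then show "m \<in> {m. \<forall>k<m. P k}" using lt by auto
  qed
  then show ?thesis using sup_enat_atMost lt by (intro exI[of _ k0]) auto
qed

lemma extract_zeros:
  fixes f :: "complex \<Rightarrow> complex"
  assumes holf: "f holomorphic_on ball 0 1" and r: "0 < r" "r < 1"
    and notpoly: "\<not>(\<exists>p::complex poly. \<forall>z\<in>ball 0 1. f z = poly p z)"
    and big: "enat L < NK f (cball 0 r) n"
  shows "\<exists>p Z m. degree p \<le> n \<and> finite Z \<and> Z \<subseteq> cball 0 r \<and>
     (\<forall>z\<in>Z. \<forall>k<m z. (deriv ^^ k) (\<lambda>w. f w - poly p w) z = 0) \<and> L < (\<Sum>z\<in>Z. m z)"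
proof -
  obtain p where p: "degree p \<le> n" "enat L < zero_count (\<lambda>z. f z - poly p z) (cball 0 r)"
    using big unfolding NK_def less_SUP_iff by auto
  define g where "g = (\<lambda>z. f z - poly p z)"
  obtain S where S: "finite S" "S \<subseteq> cball 0 r" "enat L < (\<Sum>z\<in>S. zero_mult g z)"
    using p(2) unfolding zero_count_def less_SUP_iff g_def by auto
  have holg: "g holomorphic_on ball 0 1" unfolding g_def by (intro holomorphic_intros holf)
  have nz: "\<not> (\<forall>k. (deriv ^^ k) g z = 0)" if "z \<in> S" for z
  proof
    assume all: "\<forall>k. (deriv ^^ k) g z = 0"
    have "z \<in> ball 0 1" using that S r by auto
    then have "\<forall>w\<in>ball 0 1. g w = 0"
      using holomorphic_fun_eq_0_on_connected[OF holg open_ball connected_ball] all by blast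
    then have "\<forall>w\<in>ball 0 1. f w = poly p w" unfolding g_def by simp
    then show False using notpoly by blast
  qed
  have "\<forall>z\<in>S. \<exists>m. zero_mult g z = enat m \<and> (\<forall>k<m. (deriv ^^ k) g z = 0)"
    using zm_finite[OF nz] unfolding zero_mult_def by blast
  then obtain m where m: "\<And>z. z \<in> S \<Longrightarrow> zero_mult g z = enat (m z) \<and> (\<forall>k<m z. (deriv ^^ k) g z = 0)"
    by metis
  have "(\<Sum>z\<in>S. zero_mult g z) = (\<Sum>z\<in>S. of_nat (m z))"
    by (rule sum.cong) (use m in \<open>auto simp: of_nat_eq_enat\<close>)
  also have "\<dots> = of_nat (\<Sum>z\<in>S. m z)" by simp
  finally have "L < (\<Sum>z\<in>S. m z)" using S(3) by (simp add: of_nat_eq_enat)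
  then show ?thesis using p(1) S m unfolding g_def by blast
qed

lemma seg:
  assumes sm: "strict_mono (nk::nat \<Rightarrow> nat)" and K: "nk K < j"
  shows "\<exists>k\<ge>K. nk k < j \<and> j \<le> nk (Suc k)"
proof -
  define A where "A = {k. nk k < j}"
  have fin: "finite A"
  proof (rule finite_subset)
    show "A \<subseteq> {..<j}" unfolding A_def using seq_suble[OF sm] by (auto intro: le_less_trans)
  qed simp
  have KA: "K \<in> A" using K by (simp add: A_def)
  define k where "k = Max A"
  have kA: "k \<in> A" unfolding k_def using fin KA by (intro Max_in) auto
  have Kk: "K \<le> k" unfolding k_def using fin KA by simp
  have "Suc k \<notin> A" using Max_ge[OF fin, of "Suc k"] unfolding k_def[symmetric] by auto
  then show ?thesis using kA Kk by (intro exI[of _ k]) (auto simp: A_def)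
qed

lemma maxterm:
  fixes g :: "nat \<Rightarrow> real"
  assumes "summable g" "\<And>i. 0 \<le> g i" "0 < g m"
  shows "\<exists>j. \<forall>i. g i \<le> g j"
proof -
  have "g \<longlonglongrightarrow> 0" by (rule summable_LIMSEQ_zero[OF assms(1)])
  then have "\<exists>N. \<forall>i\<ge>N. \<bar>g i - 0\<bar> < g m"
    using assms(3) unfolding LIMSEQ_def dist_real_def by blast
  then obtain N where N: "\<And>i. i \<ge> N \<Longrightarrow> \<bar>g i - 0\<bar> < g m" by blast
  define N' where "N' = max N m"
  have "Max (g ` {..N'}) \<in> g ` {..N'}" by (rule Max_in) auto
  then obtain j where j: "j \<in> {..N'}" "g j = Max (g ` {..N'})" by (metis imageE)
  have le: "g i \<le> g j" if "i \<le> N'" for i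
    using that j(2) by (simp add: Max_ge)
  have gm: "g m \<le> g j" by (rule le) (simp add: N'_def)
  have "g i \<le> g j" for i
  proof (cases "i \<le> N'")
    case True then show ?thesis by (rule le)
  next
    case False
    then have "g i < g m" using N[of i] assms(2)[of i] by (simp add: N'_def)
    then show ?thesis using gm by linarith
  qed
  then show ?thesis by blast
qed

lemma quad_le_pow: "real n * (real n + 1) \<le> 2 * 2^n"
proof (induction n)
  case 0 then show ?case by simp
next
  case (Suc n)
  show ?case
  proof (cases "n \<ge> 2")
    case True
    have h2: "real n + 2 \<le> 2 * real n" using True by simp
    have "real (Suc n) * (real (Suc n) + 1) = (real n + 1) * (real n + 2)" by (simp add: algebra_simps)
    also have "\<dots> \<le> (real n + 1) * (2 * real n)" by (rule mult_left_mono[OF h2]) simp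
    also have "\<dots> = 2 * (real n * (real n + 1))" by (simp add: algebra_simps)
    finally have "real (Suc n) * (real (Suc n) + 1) \<le> 2 * (real n * (real n + 1))" .
    also have "\<dots> \<le> 2 * (2 * 2^n)" using Suc.IH by simp
    finally show ?thesis by simp
  next
    case False
    then have "n = 0 \<or> n = 1" by auto
    then show ?thesis by auto
  qed
qed

lemma eventually_lin_le_pow:
  fixes A :: real
  shows "\<exists>n0. \<forall>n\<ge>n0. 4 * A * (real n + 1) \<le> 2^n"
proof -
  define n0 where "n0 = nat \<lceil>8 * \<bar>A\<bar>\<rceil>"
  have "4 * A * (real n + 1) \<le> 2^n" if "n \<ge> n0" for n
  proof -
    have "8 * \<bar>A\<bar> \<le> real n" using that unfolding n0_def by linarith
    then have "4 * A * (real n + 1) \<le> (real n / 2) * (real n + 1)"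
      by (intro mult_right_mono) (auto simp: abs_if split: if_splits)
    also have "\<dots> \<le> 2^n" using quad_le_pow[of n] by simp
    finally show ?thesis .
  qed
  then show ?thesis by blast
qed

lemma lin_le_32pow: "1 \<le> n \<Longrightarrow> 16 * (real n + 1) \<le> 32^n"
proof (induction n rule: nat_induct_at_least)
  case base then show ?case by simp
next
  case (Suc n)
  have "16 * (real (Suc n) + 1) \<le> 2 * (16 * (real n + 1))" using Suc by simp
  also have "\<dots> \<le> 32 * 32^n" using Suc by simp
  finally show ?case by simp
qed

lemma step1:
  fixes f :: "complex \<Rightarrow> complex" and nk :: "nat \<Rightarrow> nat" and C' :: nat
  assumes holf: "f holomorphic_on ball 0 1" and r: "0 < r" "r < 1"
    and notpoly: "\<not>(\<exists>p::complex poly. \<forall>z\<in>ball 0 1. f z = poly p z)"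
    and sm: "strict_mono nk" and C1: "1 \<le> C'" and Cb: "\<forall>k\<ge>1. nk (Suc k) \<le> C' * nk k"
    and hyp: "\<forall>M::nat. eventually (\<lambda>k. enat (M * nk k) < NK f (cball 0 r) (nk k)) sequentially"
    and mu: "0 < \<mu>" "\<mu> \<le> 1"
  shows "\<exists>J. \<forall>j\<ge>J. norm ((deriv ^^ j) f 0) / fact j * r^j \<le> \<mu>^j"
proof -
  define \<rho> where "\<rho> = (1 + r)/2"
  have rho: "r < \<rho>" "\<rho> < 1" using r unfolding \<rho>_def by auto
  have sub: "cball 0 \<rho> \<subseteq> ball (0::complex) 1" using rho by auto
  have "compact (f ` cball 0 \<rho>)"
    by (rule compact_continuous_image)
       (use holomorphic_on_imp_continuous_on[OF holomorphic_on_subset[OF holf sub]] in auto)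
  then obtain A0 where A0: "\<forall>x\<in>f ` cball 0 \<rho>. norm x \<le> A0"
    using compact_imp_bounded bounded_iff by metis
  define A where "A = max A0 1"
  have A1: "1 \<le> A" unfolding A_def by simp
  have Ab: "norm (f t) \<le> A" if "norm t \<le> \<rho>" for t
  proof -
    have "t \<in> cball 0 \<rho>" using that by simp
    then have "norm (f t) \<le> A0" using A0 by blast
    then show ?thesis unfolding A_def by linarith
  qed
  define \<theta> where "\<theta> = 2*\<rho>*r/(\<rho>^2+r^2)"
  have th: "0 \<le> \<theta>" "\<theta> \<le> 1" unfolding \<theta>_def using theta_le1[OF r(1) rho(1)] by auto
  have th1: "\<theta> < 1"
  proof -
    have "0 < (\<rho> - r)^2" using rho by simp
    then have "2*\<rho>*r < \<rho>^2+r^2" by (simp add: power2_eq_square algebra_simps)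
    moreover have "\<rho>^2+r^2 > 0" using r by (intro add_nonneg_pos) auto
    ultimately show ?thesis unfolding \<theta>_def by simp
  qed
  define \<nu> where "\<nu> = \<mu>/2"
  have nu: "0 < \<nu>" "\<nu> \<le> 1/2" using mu unfolding \<nu>_def by auto
  define lam where "lam = \<nu>^C'"
  have lam0: "0 < lam" unfolding lam_def using nu by simp
  have lam1: "lam \<le> 1/2"
  proof -
    have "\<nu>^C' \<le> \<nu>^1" by (rule power_decreasing[OF C1]) (use nu in auto)
    then show ?thesis unfolding lam_def using nu by simp
  qed
  have rr: "0 < \<rho>/r" using r rho by simp
  have "0 < lam / (\<rho>/r)" using lam0 rr by (rule divide_pos_pos)
  then obtain M where M: "\<theta>^M < lam / (\<rho>/r)" using real_arch_pow_inv[OF _ th1] by blast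
  then have "\<theta>^M * (\<rho>/r) < lam" by (simp only: pos_less_divide_eq[OF rr])
  then have M': "\<theta>^M * (\<rho>/r) \<le> lam" by (rule less_imp_le)
  obtain n0 where n0: "\<And>n. n \<ge> n0 \<Longrightarrow> 4 * A * (real n + 1) \<le> 2^n"
    using eventually_lin_le_pow[of A] by blast
  obtain K1 where K1: "\<And>k. k \<ge> K1 \<Longrightarrow> enat (M * nk k) < NK f (cball 0 r) (nk k)"
    using hyp[rule_format, of M] unfolding eventually_sequentially by blast
  define K where "K = max K1 (max n0 1)"
  have "norm ((deriv ^^ j) f 0) / fact j * r^j \<le> \<mu>^j" if j: "j \<ge> Suc (nk K)" for j
  proof -
    obtain k where k: "k \<ge> K" "nk k < j" "j \<le> nk (Suc k)"
      using seg[OF sm, of K j] j by auto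
    define n where "n = nk k"
    have nk: "k \<le> n" unfolding n_def by (rule seq_suble[OF sm])
    have n1: "1 \<le> n" "n0 \<le> n" "K1 \<le> k" "1 \<le> k" using k nk unfolding K_def by auto
    have jn: "n < j" "j \<le> C' * n" using k Cb n1 unfolding n_def by auto
    obtain p Z m where pZ: "degree p \<le> n" "finite Z" "Z \<subseteq> cball 0 r"
        "\<forall>z\<in>Z. \<forall>i<m z. (deriv ^^ i) (\<lambda>w. f w - poly p w) z = 0" "M * n < (\<Sum>z\<in>Z. m z)"
      using extract_zeros[OF holf r notpoly K1[OF n1(3)]] unfolding n_def by blast
    define N where "N = (\<Sum>z\<in>Z. m z)"
    have thN: "\<theta>^N \<le> \<theta>^(M*n)" by (rule power_decreasing) (use pZ(5) th in \<open>auto simp: N_def\<close>)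
    have b1: "\<theta>^N * (\<rho>/r)^n \<le> lam^n"
    proof -
      have "\<theta>^N * (\<rho>/r)^n \<le> \<theta>^(M*n) * (\<rho>/r)^n" by (rule mult_right_mono[OF thN]) (use rr in simp)
      also have "\<dots> = (\<theta>^M * (\<rho>/r))^n" by (simp only: power_mult power_mult_distrib)
      also have "\<dots> \<le> lam^n" by (rule power_mono[OF M' mult_nonneg_nonneg[OF zero_le_power[OF th(1)] less_imp_le[OF rr]]])
      finally show ?thesis .
    qed
    have lin: "4 * A * (real n + 1) \<le> 2^n" by (rule n0[OF n1(2)])
    have An: "0 \<le> 4 * A * (real n + 1)" using A1 by (intro mult_nonneg_nonneg) auto
    have lampow: "lam^n \<le> (1/2)^n" by (rule power_mono[OF lam1]) (use lam0 in simp)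
    have small: "\<theta>^N * (real n + 1) * (\<rho>/r)^n \<le> 1/2"
    proof -
      have "\<theta>^N * (real n + 1) * (\<rho>/r)^n = (real n + 1) * (\<theta>^N * (\<rho>/r)^n)" by (simp add: mult_ac)
      also have "\<dots> \<le> (real n + 1) * (1/2)^n"
        by (rule mult_left_mono[OF order_trans[OF b1 lampow]]) simp
      also have "\<dots> = (real n + 1) / 2^n" by (simp add: power_one_over)
      also have "\<dots> \<le> 1/4"
      proof -
        have "4 * 1 * (real n + 1) \<le> 4 * A * (real n + 1)"
          by (intro mult_right_mono mult_left_mono A1) auto
        then have "4 * (real n + 1) \<le> 2^n" using lin by linarith
        then show ?thesis by (simp add: divide_le_eq)
      qed
      finally show ?thesis by simp
    qed
    have key: "norm ((deriv ^^ j) f 0) / fact j * r^j \<le> 4 * A * (real n + 1) * \<theta>^N * (\<rho>/r)^n"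
      unfolding \<theta>_def
      by (rule key_lemma[OF holf r(1) rho(1) rho(2) pZ(1) Ab pZ(2) pZ(3) pZ(4) N_def small[unfolded \<theta>_def] jn(1)])
    also have "\<dots> = 4 * A * (real n + 1) * (\<theta>^N * (\<rho>/r)^n)" by (simp add: mult_ac)
    also have "\<dots> \<le> 4 * A * (real n + 1) * lam^n"
      by (rule mult_left_mono[OF b1 An])
    also have "lam^n \<le> \<nu>^j"
    proof -
      have "lam^n = \<nu>^(C' * n)" unfolding lam_def by (simp add: power_mult)
      also have "\<dots> \<le> \<nu>^j" by (rule power_decreasing[OF jn(2)]) (use nu in auto)
      finally show ?thesis .
    qed
    then have "4 * A * (real n + 1) * lam^n \<le> 4 * A * (real n + 1) * \<nu>^j"
      by (rule mult_left_mono[OF _ An])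
    also have "\<dots> = (4 * A * (real n + 1) / 2^j) * \<mu>^j" unfolding \<nu>_def by (simp add: power_divide)
    also have "\<dots> \<le> 1 * \<mu>^j"
    proof (rule mult_right_mono)
      have "(2::real)^n \<le> 2^j" by (rule power_increasing) (use jn in auto)
      then have "4 * A * (real n + 1) \<le> 2^j" using lin by linarith
      then show "4 * A * (real n + 1) / 2^j \<le> 1" by (simp add: divide_le_eq)
    qed (use mu in simp)
    finally show ?thesis by simp
  qed
  then show ?thesis by blast
qed

lemma entire_ext:
  fixes f :: "complex \<Rightarrow> complex"
  assumes holf: "f holomorphic_on ball 0 1" and r: "0 < r"
    and S1: "\<And>\<mu>. 0 < \<mu> \<Longrightarrow> \<mu> \<le> 1 \<Longrightarrow> \<exists>J. \<forall>j\<ge>J. norm ((deriv ^^ j) f 0) / fact j * r^j \<le> \<mu>^j"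
  defines "a \<equiv> (\<lambda>j. (deriv ^^ j) f 0 / fact j)"
  shows "\<exists>F. (\<forall>R. F holomorphic_on ball 0 R) \<and> (\<forall>z\<in>ball 0 1. F z = f z) \<and>
    (\<forall>z. summable (\<lambda>j. norm (a j * z^j))) \<and> (\<forall>z. F z = (\<Sum>j. a j * z^j))"
proof -
  have abs: "summable (\<lambda>j. norm (a j * z^j))" for z
  proof -
    define \<mu> where "\<mu> = min 1 (r / (2 * (norm z + 1)))"
    have d0: "0 < norm z + 1" using norm_ge_zero[of z] by linarith
    have d: "0 < 2 * (norm z + 1)" by (rule mult_pos_pos[OF _ d0]) simp
    have pos: "0 < r / (2 * (norm z + 1))" by (rule divide_pos_pos[OF r d])
    have mu: "0 < \<mu>" "\<mu> \<le> 1" "\<mu> \<le> r / (2 * (norm z + 1))" using pos unfolding \<mu>_def by auto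
    obtain J where J: "\<And>j. j \<ge> J \<Longrightarrow> norm ((deriv ^^ j) f 0) / fact j * r^j \<le> \<mu>^j"
      using S1[OF mu(1,2)] by blast
    have q: "\<mu> * norm z / r \<le> 1/2"
    proof -
      have "\<mu> * norm z \<le> r / (2 * (norm z + 1)) * norm z" by (rule mult_right_mono[OF mu(3)]) simp
      also have "\<dots> \<le> r / 2"
      proof -
        have "norm z / (norm z + 1) \<le> 1" using d0 by (simp add: divide_le_eq)
        then have "r / 2 * (norm z / (norm z + 1)) \<le> r / 2 * 1" by (intro mult_left_mono) (use r in auto)
        then show ?thesis by (simp add: field_simps)
      qed
      finally show ?thesis using r by (simp add: divide_le_eq)
    qed
    show ?thesis
    proof (rule summable_comparison_test'[of "\<lambda>j. (1/2::real)^j" J])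
      show "summable (\<lambda>j. (1/2::real)^j)" by simp
      fix j assume "J \<le> j"
      then have b: "norm ((deriv ^^ j) f 0) / fact j * r^j \<le> \<mu>^j" by (rule J)
      have "norm (norm (a j * z^j)) = (norm ((deriv ^^ j) f 0) / fact j * r^j) * (norm z / r)^j"
        unfolding a_def using r by (simp add: norm_mult norm_divide norm_power power_divide)
      also have "\<dots> \<le> \<mu>^j * (norm z / r)^j" by (rule mult_right_mono[OF b]) (use r in simp)
      also have "\<dots> = (\<mu> * norm z / r)^j" by (simp add: power_mult_distrib[symmetric])
      also have "\<dots> \<le> (1/2)^j" by (rule power_mono[OF q]) (use mu r in simp)
      finally show "norm (norm (a j * z^j)) \<le> (1/2)^j" .
    qed
  qed
  define F where "F = (\<lambda>z. \<Sum>j. a j * z^j)"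
  have sums: "(\<lambda>j. a j * z^j) sums F z" for z
    unfolding F_def by (rule summable_sums[OF summable_norm_cancel[OF abs]])
  have "F holomorphic_on ball 0 R" for R
    by (rule power_series_holomorphic[where a=a]) (use sums in simp)
  moreover have "F z = f z" if "z \<in> ball 0 1" for z
  proof -
    have "(\<lambda>n. (deriv ^^ n) f 0 / fact n * (z - 0)^n) sums f z"
      by (rule holomorphic_power_series[OF holf that])
    then have "(\<lambda>j. a j * z^j) sums f z" unfolding a_def by simp
    then show ?thesis using sums sums_unique2 by blast
  qed
  ultimately show ?thesis using abs unfolding F_def by blast
qed

lemma step2:
  fixes f F :: "complex \<Rightarrow> complex" and nk :: "nat \<Rightarrow> nat" and C' :: nat and a :: "nat \<Rightarrow> complex"
  assumes holf: "f holomorphic_on ball 0 1" and r: "0 < r" "r < 1"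
    and notpoly: "\<not>(\<exists>p::complex poly. \<forall>z\<in>ball 0 1. f z = poly p z)"
    and sm: "strict_mono nk" and C1: "1 \<le> C'" and Cb: "\<forall>k\<ge>1. nk (Suc k) \<le> C' * nk k"
    and hyp: "\<forall>M::nat. eventually (\<lambda>k. enat (M * nk k) < NK f (cball 0 r) (nk k)) sequentially"
    and a_def: "a = (\<lambda>j. (deriv ^^ j) f 0 / fact j)"
    and holF: "\<forall>R. F holomorphic_on ball 0 R" and Ff: "\<forall>z\<in>ball 0 1. F z = f z"
    and absF: "\<forall>z. summable (\<lambda>j. norm (a j * z^j))" and Fsum: "\<forall>z. F z = (\<Sum>j. a j * z^j)"
  shows False
proof -
  define M where "M = C' + 2"
  obtain K1 where K1: "\<And>k. k \<ge> K1 \<Longrightarrow> enat (M * nk k) < NK f (cball 0 r) (nk k)"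
    using hyp[rule_format, of M] unfolding eventually_sequentially by blast
  define K where "K = max K1 1"
  define J0 where "J0 = nk K"
  have evF: "eventually (\<lambda>w. F w = f w) (nhds z)" if "z \<in> ball 0 1" for z
    unfolding eventually_nhds using Ff that by (intro exI[of _ "ball 0 1"]) auto
  obtain m0 where m0: "m0 > J0" "a m0 \<noteq> 0"
  proof (rule ccontr)
    assume "\<not> thesis"
    with that have z: "\<And>m. m > J0 \<Longrightarrow> a m = 0" by blast
    have "\<forall>z\<in>ball 0 1. f z = poly (\<Sum>i\<le>J0. monom (a i) i) z"
    proof
      fix z :: complex assume zb: "z \<in> ball 0 1"
      have "f z = (\<Sum>j. a j * z^j)" using Ff Fsum zb by metis
      also have "\<dots> = (\<Sum>j\<le>J0. a j * z^j)"
        by (rule suminf_finite) (use z in auto)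
      also have "\<dots> = poly (\<Sum>i\<le>J0. monom (a i) i) z" by (simp add: poly_sum poly_monom)
      finally show "f z = poly (\<Sum>i\<le>J0. monom (a i) i) z" .
    qed
    then show False using notpoly by blast
  qed
  define B where "B = (\<Sum>i\<le>J0. norm (a i))"
  have B0: "0 \<le> B" unfolding B_def by (simp add: sum_nonneg)
  have am0: "0 < norm (a m0)" using m0 by simp
  define x0 :: real where "x0 = 16 * 4^M"
  define R where "R = max (x0 * r) (max 1 (B / norm (a m0) + 1))"
  have p4: "(1::real) \<le> 4^M" by (rule one_le_power) simp
  then have x0: "1 \<le> x0" unfolding x0_def by linarith
  have x16: "16 \<le> x0" using p4 unfolding x0_def by linarith
  have R1: "1 \<le> R" "x0 * r \<le> R" "B / norm (a m0) < R" unfolding R_def by auto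
  have R0: "0 < R" using R1 by simp
  define g where "g = (\<lambda>i. norm (a i) * R^i)"
  have gs: "summable g"
  proof -
    have "summable (\<lambda>j. norm (a j * (of_real R)^j))" using absF by blast
    moreover have "norm (a j * (of_real R)^j) = g j" for j using R0 by (simp add: g_def norm_mult norm_power)
    ultimately show ?thesis by simp
  qed
  have g0: "0 \<le> g i" for i unfolding g_def using R0 by simp
  have gm0: "0 < g m0" unfolding g_def using am0 R0 by simp
  obtain j where j: "\<And>i. g i \<le> g j" using maxterm[OF gs g0 gm0] by blast
  have gj: "0 < g j" using j[of m0] gm0 by simp
  have aj: "0 < norm (a j)" using gj R0 unfolding g_def by (simp add: zero_less_mult_iff)
  have jJ0: "J0 < j"
  proof (rule ccontr)
    assume "\<not> J0 < j" then have jle: "j \<le> J0" by simp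
    have "norm (a j) \<le> B" unfolding B_def by (rule member_le_sum) (use jle in auto)
    moreover have "R^j \<le> R^J0" by (rule power_increasing[OF jle R1(1)])
    ultimately have "g j \<le> B * R^J0" unfolding g_def by (intro mult_mono) (use R0 B0 in auto)
    also have "B * R^J0 < norm (a m0) * R * R^J0"
    proof -
      have "B < norm (a m0) * R" using R1(3) am0 by (simp add: divide_less_eq mult.commute)
      then show ?thesis using R0 by simp
    qed
    also have "norm (a m0) * R * R^J0 = norm (a m0) * R^(Suc J0)" by simp
    also have "\<dots> \<le> norm (a m0) * R^m0"
      by (intro mult_left_mono power_increasing) (use m0 R1 in auto)
    also have "\<dots> = g m0" by (simp add: g_def)
    finally have "g j < g m0" .
    then show False using j[of m0] by linarith
  qed
  obtain k where k: "k \<ge> K" "nk k < j" "j \<le> nk (Suc k)"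
    using seg[OF sm, of K j] jJ0 unfolding J0_def by auto
  define n where "n = nk k"
  have nk: "k \<le> n" unfolding n_def by (rule seq_suble[OF sm])
  have n1: "1 \<le> n" "K1 \<le> k" "1 \<le> k" using k nk unfolding K_def by auto
  have jn: "n < j" "j \<le> C' * n" using k Cb n1 unfolding n_def by auto
  obtain p Z m where pZ: "degree p \<le> n" "finite Z" "Z \<subseteq> cball 0 r"
      "\<forall>z\<in>Z. \<forall>i<m z. (deriv ^^ i) (\<lambda>w. f w - poly p w) z = 0" "M * n < (\<Sum>z\<in>Z. m z)"
    using extract_zeros[OF holf r notpoly K1[OF n1(2)]] unfolding n_def by blast
  define N where "N = (\<Sum>z\<in>Z. m z)"
  have derF: "\<forall>z\<in>Z. \<forall>i<m z. (deriv ^^ i) (\<lambda>w. F w - poly p w) z = 0"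
  proof (intro ballI allI impI)
    fix z i assume z: "z \<in> Z" and i: "i < m z"
    have zb: "z \<in> ball 0 1" using z pZ(3) r by auto
    have "(deriv ^^ i) (\<lambda>w. F w - poly p w) z = (deriv ^^ i) (\<lambda>w. f w - poly p w) z"
      by (rule higher_deriv_cong_ev[OF _ refl]) (use evF[OF zb] in \<open>auto elim: eventually_mono\<close>)
    then show "(deriv ^^ i) (\<lambda>w. F w - poly p w) z = 0" using pZ(4) z i by simp
  qed
  define \<rho> where "\<rho> = R / 2"
  define x where "x = R / r"
  have xx0: "x0 \<le> x" unfolding x_def using R1(2) r by (simp add: le_divide_eq)
  have x1: "1 \<le> x" using xx0 x0 by simp
  have rho: "r < \<rho>" "\<rho> < R"
  proof -
    have "2 * r < x0 * r" by (intro mult_strict_right_mono) (use r x16 in auto)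
    then show "r < \<rho>" using R1(2) unfolding \<rho>_def by simp
    show "\<rho> < R" using R0 unfolding \<rho>_def by simp
  qed
  have rhor: "\<rho> / r = x / 2" unfolding \<rho>_def x_def by simp
  have Fb: "norm (F t) \<le> 2 * g j" if t: "norm t \<le> \<rho>" for t
  proof -
    have "norm (F t) \<le> (\<Sum>i. norm (a i * t^i))" using Fsum summable_norm[OF absF[rule_format, of t]] by metis
    also have "\<dots> \<le> (\<Sum>i. g j * (1/2)^i)"
    proof (rule suminf_le)
      fix i
      have "norm (a i * t^i) \<le> norm (a i) * \<rho>^i"
        unfolding norm_mult norm_power by (intro mult_left_mono power_mono) (use t in auto)
      also have "\<dots> = g i * (1/2)^i" unfolding g_def \<rho>_def by (simp add: power_divide)
      also have "\<dots> \<le> g j * (1/2)^i" by (intro mult_right_mono j) simp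
      finally show "norm (a i * t^i) \<le> g j * (1/2)^i" .
    next
      show "summable (\<lambda>i. norm (a i * t^i))" using absF by blast
      show "summable (\<lambda>i. g j * (1/2::real)^i)" by (intro summable_mult) simp
    qed
    also have "\<dots> = 2 * g j" by (simp add: suminf_mult suminf_geometric)
    finally show ?thesis .
  qed
  define \<theta> where "\<theta> = 2*\<rho>*r/(\<rho>^2+r^2)"
  have th: "0 \<le> \<theta>" "\<theta> \<le> 1" unfolding \<theta>_def using theta_le1[OF r(1) rho(1)] by auto
  have thx: "\<theta> \<le> 4 / x"
  proof -
    have rp: "0 < \<rho>" using rho r by simp
    have "\<theta> \<le> 2*\<rho>*r/(\<rho>^2)" unfolding \<theta>_def
    proof (rule divide_left_mono)
      show "\<rho>^2 \<le> \<rho>^2 + r^2" by simp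
      show "0 \<le> 2*\<rho>*r" using r rp by simp
      have "0 < \<rho>^2 + r^2" using rp by (intro add_pos_nonneg) auto
      then show "0 < (\<rho>^2 + r^2) * \<rho>^2" using rp by simp
    qed
    also have "\<dots> = 4 / x" unfolding x_def \<rho>_def using r R0 by (simp add: power2_eq_square field_simps)
    finally show ?thesis .
  qed
  define Q where "Q = x^(C'+1) * \<theta>^M / 2"
  have Q: "Q \<le> 1/32"
  proof -
    have xt: "x * \<theta> \<le> 4" using thx x1 by (simp add: le_divide_eq mult.commute)
    have "x^(C'+1) * \<theta>^M = (x * \<theta>)^(C'+1) * \<theta>" unfolding M_def by (simp add: power_mult_distrib)
    also have "\<dots> \<le> 4^(C'+1) * (4 / x)"
      by (intro mult_mono power_mono xt thx) (use th x1 in auto)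
    also have "\<dots> = 4^M / x" unfolding M_def by simp
    also have "\<dots> \<le> 4^M / x0" by (rule divide_left_mono[OF xx0]) (use x0 x1 in \<open>auto intro: mult_pos_pos\<close>)
    also have "\<dots> = 1/16" unfolding x0_def by simp
    finally have "x^(C'+1) * \<theta>^M \<le> 1/16" .
    then show ?thesis unfolding Q_def by linarith
  qed
  have Q0: "0 \<le> Q" unfolding Q_def using th x1 by simp
  have main: "x^j * (\<theta>^N * (\<rho>/r)^n) \<le> (1/32)^n"
  proof -
    have "x^j \<le> x^(C'*n)" by (rule power_increasing[OF jn(2) x1])
    moreover have "\<theta>^N \<le> \<theta>^(M*n)" by (rule power_decreasing) (use pZ(5) th in \<open>auto simp: N_def\<close>)
    ultimately have "x^j * (\<theta>^N * (\<rho>/r)^n) \<le> x^(C'*n) * (\<theta>^(M*n) * (x/2)^n)"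
      unfolding rhor using x1 th by (intro mult_mono) auto
    also have "\<dots> = Q^n" unfolding Q_def
      by (simp add: power_divide power_mult_distrib power_mult[symmetric] power_add algebra_simps)
    also have "\<dots> \<le> (1/32)^n" by (rule power_mono[OF Q Q0])
    finally show ?thesis .
  qed
  have lin: "(real n + 1) * (1/32)^n \<le> 1/16"
  proof -
    have "16 * (real n + 1) \<le> 32^n" by (rule lin_le_32pow[OF n1(1)])
    then show ?thesis by (simp add: power_one_over divide_le_eq)
  qed
  have xj: "1 \<le> x^j" using x1 by simp
  have small: "\<theta>^N * (real n + 1) * (\<rho>/r)^n \<le> 1/2"
  proof -
    have T0: "0 \<le> \<theta>^N * (\<rho>/r)^n" using th rho r by simp
    have "\<theta>^N * (\<rho>/r)^n \<le> x^j * (\<theta>^N * (\<rho>/r)^n)" using xj T0 by (simp add: mult_le_cancel_right1)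
    then have "\<theta>^N * (\<rho>/r)^n \<le> (1/32)^n" using main by linarith
    then have "(real n + 1) * (\<theta>^N * (\<rho>/r)^n) \<le> (real n + 1) * (1/32)^n" by (intro mult_left_mono) auto
    moreover have "\<theta>^N * (real n + 1) * (\<rho>/r)^n = (real n + 1) * (\<theta>^N * (\<rho>/r)^n)" by (simp add: mult_ac)
    ultimately show ?thesis using lin by linarith
  qed
  have key: "norm ((deriv ^^ j) F 0) / fact j * r^j \<le> 4 * (2 * g j) * (real n + 1) * \<theta>^N * (\<rho>/r)^n"
    unfolding \<theta>_def
    by (rule key_lemma[OF holF[rule_format, of R] r(1) rho(1) rho(2) pZ(1) Fb pZ(2) pZ(3) derF N_def small[unfolded \<theta>_def] jn(1)])
  have dF: "(deriv ^^ j) F 0 = (deriv ^^ j) f 0" by (rule higher_deriv_cong_ev[OF evF refl]) simp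
  define P where "P = norm (a j) * r^j"
  have P0: "0 < P" unfolding P_def using aj r by simp
  have lhs: "norm ((deriv ^^ j) F 0) / fact j * r^j = P" unfolding dF P_def a_def by (simp add: norm_divide)
  have gjP: "g j = P * x^j" unfolding g_def P_def x_def using r by (simp add: power_divide)
  have "P \<le> 8 * P * (real n + 1) * (x^j * (\<theta>^N * (\<rho>/r)^n))"
    using key unfolding lhs gjP by (simp add: mult_ac)
  also have "\<dots> \<le> 8 * P * (real n + 1) * (1/32)^n"
    by (rule mult_left_mono[OF main]) (use P0 in simp)
  also have "\<dots> = 8 * P * ((real n + 1) * (1/32)^n)" by (simp add: mult_ac)
  also have "\<dots> \<le> 8 * P * (1/16)" by (rule mult_left_mono[OF lin]) (use P0 in simp)
  finally show False using P0 by simp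
qed

theorem corollary2p3:
  fixes nk :: "nat \<Rightarrow> nat" and C :: real and f :: "complex \<Rightarrow> complex" and r :: real
  assumes "strict_mono nk"
    and "\<forall>k. real (nk (Suc k)) / real (nk k) \<le> C"
    and "f holomorphic_on ball 0 1"
    and "0 < r" and "r < 1"
    and "((\<lambda>k. ereal_of_enat (NK f (cball 0 r) (nk k)) / ereal (real (nk k)))
            \<longlongrightarrow> \<infinity>) sequentially"
  shows "\<exists>p::complex poly. \<forall>z\<in>ball 0 1. f z = poly p z"
proof (rule ccontr)
  assume notpoly: "\<not> (\<exists>p::complex poly. \<forall>z\<in>ball 0 1. f z = poly p z)"
  note sm = assms(1) and holf = assms(3) and r = assms(4,5)
  have pos: "0 < nk k" if "1 \<le> k" for k
  proof -
    have "nk 0 < nk k" using sm that unfolding strict_mono_def by auto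
    then show ?thesis by simp
  qed
  define C' where "C' = nat \<lceil>C\<rceil>"
  have CC: "C \<le> real C'" unfolding C'_def by (simp add: real_nat_ceiling_ge)
  have Cb: "\<forall>k\<ge>1. nk (Suc k) \<le> C' * nk k"
  proof (intro allI impI)
    fix k :: nat assume k: "1 \<le> k"
    have p: "0 < real (nk k)" using pos[OF k] by simp
    have "real (nk (Suc k)) / real (nk k) \<le> C" using assms(2) by blast
    then have "real (nk (Suc k)) \<le> C * real (nk k)" using p by (simp add: divide_le_eq)
    also have "\<dots> \<le> real C' * real (nk k)" by (rule mult_right_mono[OF CC]) simp
    finally have "real (nk (Suc k)) \<le> real (C' * nk k)" by simp
    then show "nk (Suc k) \<le> C' * nk k" by (simp only: of_nat_le_iff)
  qed
  have C1: "1 \<le> C'"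
  proof (rule ccontr)
    assume "\<not> 1 \<le> C'" then have "C' = 0" by simp
    then have "nk (Suc 1) \<le> 0" using Cb by auto
    moreover have "0 < nk (Suc 1)" using pos[of "Suc 1"] by simp
    ultimately show False by simp
  qed
  have hyp: "\<forall>M::nat. eventually (\<lambda>k. enat (M * nk k) < NK f (cball 0 r) (nk k)) sequentially"
  proof
    fix M :: nat
    have ev1: "eventually (\<lambda>k. ereal (real M) < ereal_of_enat (NK f (cball 0 r) (nk k)) / ereal (real (nk k))) sequentially"
      using assms(6) unfolding tendsto_PInfty by blast
    have ev2: "eventually (\<lambda>k. 1 \<le> k) sequentially" by (rule eventually_ge_at_top)
    show "eventually (\<lambda>k. enat (M * nk k) < NK f (cball 0 r) (nk k)) sequentially"
      using ev1 ev2
    proof (rule eventually_elim2)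
      fix k assume lt: "ereal (real M) < ereal_of_enat (NK f (cball 0 r) (nk k)) / ereal (real (nk k))"
        and k: "1 \<le> k"
      have p: "0 < real (nk k)" using pos[OF k] by simp
      show "enat (M * nk k) < NK f (cball 0 r) (nk k)"
      proof (cases "NK f (cball 0 r) (nk k)")
        case (enat a)
        then have "real M < real a / real (nk k)" using lt p by simp
        then have "real M * real (nk k) < real a" using p by (simp add: less_divide_eq)
        then have "M * nk k < a" by (metis of_nat_less_iff of_nat_mult)
        then show ?thesis using enat by simp
      next
        case infinity
        then show ?thesis by simp
      qed
    qed
  qed
  have S1: "\<exists>J. \<forall>j\<ge>J. norm ((deriv ^^ j) f 0) / fact j * r^j \<le> \<mu>^j" if "0 < \<mu>" "\<mu> \<le> 1" for \<mu>
    by (rule step1[OF holf r notpoly sm C1 Cb hyp that])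
  obtain F where F: "\<forall>R. F holomorphic_on ball 0 R" "\<forall>z\<in>ball 0 1. F z = f z"
      "\<forall>z. summable (\<lambda>j. norm ((deriv ^^ j) f 0 / fact j * z^j))"
      "\<forall>z. F z = (\<Sum>j. (deriv ^^ j) f 0 / fact j * z^j)"
    using entire_ext[OF holf r(1) S1] by blast
  show False
    by (rule step2[OF holf r notpoly sm C1 Cb hyp refl F(1) F(2) F(3) F(4)])
qed

end
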